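(* Let $N = n+1 \ge 4$ be even. The height function $\omega: S_{C_N} \to \mathbb{Z}$ given by $\omega(\mathbf{0}) = 0$, $\omega(\pm \mathbf{e}_1) = 2$, and $\omega(\mathbf{a}) = 1$ for all other $\mathbf{a}\in S_{C_N}$ induces a regular unimodular triangulation $\Delta_N$ of the point configuration $S_{C_N}$ (whose convex hull is $P_{C_N}$). Specifically, \[ \Delta_N = \bigcup_{\boldsymbol{\lambda} \in \Lambda_N} \Delta_+(G^{\mathbf{0}}_{\boldsymbol{\lambda}}). \]
   Context: $\mathbf{e}_1,\dots,\mathbf{e}_n$ is the standard basis of $\mathbb{R}^n$, with the convention $\mathbf{e}_0 = \mathbf{e}_N = \mathbf{0}$. The cycle graph $C_N$ has vertices $0,\dots,N-1$ and edges $\{0,1\},\dots,\{N-2,N-1\},\{N-1,0\}$. The adjacency polytope is $P_{C_N} = \operatorname{conv}\{\mathbf{e}_i - \mathbf{e}_j \mid \{i,j\} \text{ an edge of } C_N\}$ (both orientations), and $S_{C_N} = \{\mathbf{0}\}\cup\{\mathbf{e}_i - \mathbf{e}_j \mid \{i,j\} \text{ an edge}\}$. For even $N$, $\Lambda_N = \{(\lambda_1,\dots,\lambda_N)\in\{-1,1\}^N \mid \sum_i\lambda_i = 0\}$. For $\boldsymbol{\lambda}\in\Lambda_N$, set $\mathbf{v}_0=\mathbf{0}$, $\mathbf{v}_i = \lambda_i(\mathbf{e}_{i-1}-\mathbf{e}_i)$ ($1\le i\le N$), $V_N = \{\mathbf{v}_0,\dots,\mathbf{v}_N\}$, $G^{\mathbf{0}}_{\boldsymbol{\lambda}}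 = \operatorname{conv}V_N$, and $\Delta_+(G^{\mathbf{0}}_{\boldsymbol{\lambda}}) = \{\operatorname{conv}(V_N\setminus\{\mathbf{v}_i\}) \mid 1\le i\le N,\ \lambda_i = \lambda_1\}$. The regular subdivision induced by $\omega$ is the set of projections to $\mathbb{R}^n$ of the lower facets (facets with inner normal having positive last coordinate) of $\operatorname{conv}\{(\mathbf{a},\omega(\mathbf{a})) \mid \mathbf{a}\in S_{C_N}\}$. A triangulation is unimodular if every simplex is a lattice simplex of normalized volume $1$ (i.e., $n!$ times its Euclidean volume equals $1$), and it is a triangulation of the point configuration $S_{C_N}$ if all simplices have vertices in $S_{C_N}$. *)

theory Defs
  imports "HOL-Analysis.Analysis"
begin

text \<open>Coordinates of R^n are indexed by a finite type 'n with an enumeration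
  ix : {1..n} -> 'n; e_i = axis (ix i) 1 for 1 <= i <= n = N-1, and e_0 = e_N = 0.\<close>

definition ebasis :: "(nat \<Rightarrow> 'n::finite) \<Rightarrow> nat \<Rightarrow> nat \<Rightarrow> real^'n" where
  "ebasis ix N i = (if 1 \<le> i \<and> i < N then axis (ix i) 1 else 0)"

definition cycle_edges :: "nat \<Rightarrow> nat set set" where
  "cycle_edges N = {{i, Suc i} | i. i < N - 1} \<union> {{N - 1, 0}}"

definition S_C :: "(nat \<Rightarrow> 'n::finite) \<Rightarrow> nat \<Rightarrow> (real^'n) set" where
  "S_C ix N = {0} \<union> {ebasis ix N i - ebasis ix N j | i j. {i, j} \<in> cycle_edges N}"

definition P_C :: "(nat \<Rightarrow> 'n::finite) \<Rightarrow> nat \<Rightarrow> (real^'n) set" where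
  "P_C ix N = convex hull {ebasis ix N i - ebasis ix N j | i j. {i, j} \<in> cycle_edges N}"

definition Lambda :: "nat \<Rightarrow> (nat \<Rightarrow> int) set" where
  "Lambda N = {l. (\<forall>i\<in>{1..N}. l i \<in> {-1, 1}) \<and> (\<forall>i. i \<notin> {1..N} \<longrightarrow> l i = 0)
                 \<and> (\<Sum>i=1..N. l i) = 0}"

definition vv :: "(nat \<Rightarrow> 'n::finite) \<Rightarrow> nat \<Rightarrow> (nat \<Rightarrow> int) \<Rightarrow> nat \<Rightarrow> real^'n" where
  "vv ix N l i = (if i = 0 then 0 else of_int (l i) *\<^sub>R (ebasis ix N (i - 1) - ebasis ix N i))"

definition VV :: "(nat \<Rightarrow> 'n::finite) \<Rightarrow> nat \<Rightarrow> (nat \<Rightarrow> int) \<Rightarrow> (real^'n) set" where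
  "VV ix N l = vv ix N l ` {0..N}"

definition G0 :: "(nat \<Rightarrow> 'n::finite) \<Rightarrow> nat \<Rightarrow> (nat \<Rightarrow> int) \<Rightarrow> (real^'n) set" where
  "G0 ix N l = convex hull (VV ix N l)"

definition Delta_plus :: "(nat \<Rightarrow> 'n::finite) \<Rightarrow> nat \<Rightarrow> (nat \<Rightarrow> int) \<Rightarrow> (real^'n) set set" where
  "Delta_plus ix N l = {convex hull (VV ix N l - {vv ix N l i}) | i. 1 \<le> i \<and> i \<le> N \<and> l i = l 1}"

text \<open>Regular subdivision of a point configuration S induced by height function w:
  projections of the lower facets (inner normal with positive last coordinate)
  of conv{(a, w a) | a in S}.\<close>
definition lifted :: "('a::euclidean_space) set \<Rightarrow> ('a \<Rightarrow> real) \<Rightarrow> ('a \<times> real) set" where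
  "lifted S w = convex hull ((\<lambda>a. (a, w a)) ` S)"

definition lower_facet_of :: "('a::euclidean_space \<times> real) set \<Rightarrow> ('a \<times> real) set \<Rightarrow> bool" where
  "lower_facet_of F Q \<longleftrightarrow> F facet_of Q \<and>
     (\<exists>c d. snd c > 0 \<and> Q \<subseteq> {x. c \<bullet> x \<ge> d} \<and> F = Q \<inter> {x. c \<bullet> x = d})"

definition regular_subdivision :: "('a::euclidean_space) set \<Rightarrow> ('a \<Rightarrow> real) \<Rightarrow> 'a set set" where
  "regular_subdivision S w = {fst ` F | F. lower_facet_of F (lifted S w)}"

definition lattice_point :: "real^'n \<Rightarrow> bool" where
  "lattice_point x \<longleftrightarrow> (\<forall>i. x $ i \<in> \<int>)"

definition unimodular_triangulation_of :: "(real^'n) set \<Rightarrow> (real^'n) set set \<Rightarrow> bool" where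
  "unimodular_triangulation_of S T \<longleftrightarrow>
     finite T \<and> \<Union>T = convex hull S \<and>
     (\<forall>C\<in>T. \<exists>V. V \<subseteq> S \<and> \<not> affine_dependent V \<and> card V = CARD('n) + 1 \<and>
                 C = convex hull V \<and> (\<forall>v\<in>V. lattice_point v) \<and>
                 fact CARD('n) * measure lebesgue C = 1) \<and>
     (\<forall>C1\<in>T. \<forall>C2\<in>T. (C1 \<inter> C2) face_of C1 \<and> (C1 \<inter> C2) face_of C2)"

definition omega :: "(nat \<Rightarrow> 'n::finite) \<Rightarrow> nat \<Rightarrow> real^'n \<Rightarrow> real" where
  "omega ix N a = (if a = 0 then 0
                   else if a = ebasis ix N 1 \<or> a = - ebasis ix N 1 then 2 else 1)"

end

theory Submission
  imports Defs
begin
locale cyc =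
  fixes N n :: nat and ix :: "nat \<Rightarrow> 'n::finite"
  assumes Nn: "N = n + 1" and N4: "N \<ge> 4" and evN: "even N"
    and cardn: "CARD('n) = n" and bij: "bij_betw ix {1..n} (UNIV :: 'n set)"
begin

abbreviation e where "e \<equiv> ebasis ix N"

definition u :: "nat \<Rightarrow> real^'n" where "u j = e (j - 1) - e j"
definition wt :: "nat \<Rightarrow> real" where "wt j = (if j = 1 then 2 else 1)"
definition cvec :: "(nat \<Rightarrow> real) \<Rightarrow> real^'n" where
  "cvec \<alpha> = (\<chi> m. - (\<Sum>j=1..the_inv_into {1..n} ix m. \<alpha> j))"

lemma inj_ix: "inj_on ix {1..n}" using bij bij_betw_def by blast

lemma e_inner:
  assumes "sum \<alpha> {1..N} = 0" "k \<le> N"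
  shows "cvec \<alpha> \<bullet> e k = - (\<Sum>j=1..k. \<alpha> j)"
proof -
  consider "k = 0" | "k = N" | "1 \<le> k \<and> k < N" using assms(2) by linarith
  then show ?thesis
  proof cases
    case 1 then show ?thesis by (simp add: ebasis_def)
  next
    case 2 then show ?thesis using assms by (simp add: ebasis_def)
  next
    case 3
    then have "k \<in> {1..n}" using Nn by auto
    then have "the_inv_into {1..n} ix (ix k) = k" using inj_ix by (simp add: the_inv_into_f_f)
    then show ?thesis using 3 by (simp add: ebasis_def cvec_def inner_axis)
  qed
qed

lemma u_inner:
  assumes "sum \<alpha> {1..N} = 0" "j \<in> {1..N}"
  shows "cvec \<alpha> \<bullet> u j = \<alpha> j"
proof -
  have "(\<Sum>i=1..j. \<alpha> i) = (\<Sum>i=1..j-1. \<alpha> i) + \<alpha> j"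
    using assms(2) by (cases j) (auto simp: sum.cl_ivl_Suc)
  moreover have "cvec \<alpha> \<bullet> e (j-1) = - (\<Sum>i=1..j-1. \<alpha> i)" using assms by (intro e_inner) auto
  moreover have "cvec \<alpha> \<bullet> e j = - (\<Sum>i=1..j. \<alpha> i)" using assms by (intro e_inner) auto
  ultimately show ?thesis by (simp add: u_def inner_diff_right)
qed

lemma cvec_Ints: "(\<And>j. \<alpha> j \<in> \<int>) \<Longrightarrow> cvec \<alpha> $ m \<in> \<int>"
  by (auto simp: cvec_def)

lemma dual:
  assumes "j \<in> {1..N}" "k \<in> {1..N}" "j \<noteq> k"
  shows "\<exists>c. c \<bullet> u j = 1 \<and> c \<bullet> u k = -1 \<and> (\<forall>m\<in>{1..N}-{j,k}. c \<bullet> u m = 0) \<and> (\<forall>m. c $ m \<in> \<int>)"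
proof -
  define \<alpha> where "\<alpha> = (\<lambda>m. (if m = j then 1 else 0) - (if m = k then 1 else (0::real)))"
  have s: "sum \<alpha> {1..N} = 0" using assms
    by (simp add: \<alpha>_def sum_subtractf sum.delta)
  show ?thesis
    apply (rule exI[of _ "cvec \<alpha>"])
    using assms u_inner[OF s] cvec_Ints[of \<alpha>]
    by (auto simp: \<alpha>_def)
qed

lemma third:
  assumes "j \<in> {1..N}" "k \<in> {1..N}"
  obtains m where "m \<in> {1..N}" "m \<noteq> j" "m \<noteq> k"
proof -
  have "(1::nat) \<in> {1..N}" "(2::nat) \<in> {1..N}" "(3::nat) \<in> {1..N}" using N4 by auto
  show ?thesis
  proof (cases "j \<noteq> 1 \<and> k \<noteq> 1")
    case True then show ?thesis using that[of 1] N4 by auto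
  next
    case F1: False
    show ?thesis
    proof (cases "j \<noteq> 2 \<and> k \<noteq> 2")
      case True then show ?thesis using that[of 2] N4 by auto
    next
      case False then show ?thesis using F1 that[of 3] N4 by auto
    qed
  qed
qed

lemma u_smult_eq:
  assumes "j \<in> {1..N}" "k \<in> {1..N}" "s \<in> {-1,1}" "t \<in> {-1,1}"
  shows "s *\<^sub>R u j = t *\<^sub>R u k \<longleftrightarrow> j = k \<and> s = t"
proof
  assume h: "s *\<^sub>R u j = t *\<^sub>R u k"
  show "j = k \<and> s = t"
  proof (cases "j = k")
    case True
    obtain m where m: "m \<in> {1..N}" "m \<noteq> j" using third[OF assms(1,1)] by metis
    obtain c where "c \<bullet> u j = 1" using dual[OF assms(1) m(1)] m by auto
    then have "c \<bullet> (s *\<^sub>R u j) = s" "c \<bullet> (t *\<^sub>R u k) = t" using True by auto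
    then show ?thesis using h True by metis
  next
    case False
    obtain m where m: "m \<in> {1..N}" "m \<noteq> j" "m \<noteq> k" using third[OF assms(1,2)] by metis
    obtain c where "c \<bullet> u j = 1" "c \<bullet> u k = 0" using dual[OF assms(1) m(1)] m False assms by auto
    then have "c \<bullet> (s *\<^sub>R u j) = s" "c \<bullet> (t *\<^sub>R u k) = 0" by auto
    then show ?thesis using h assms(3) by auto
  qed
qed auto

lemma u_smult_nz:
  assumes "j \<in> {1..N}" "s \<noteq> 0"
  shows "s *\<^sub>R u j \<noteq> 0"
proof -
  obtain m where m: "m \<in> {1..N}" "m \<noteq> j" using third[OF assms(1,1)] by metis
  obtain c where "c \<bullet> u j = 1" using dual[OF assms(1) m(1)] m by auto
  then have "c \<bullet> (s *\<^sub>R u j) = s" by auto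
  then show ?thesis using assms by auto
qed

end

context cyc
begin

lemma e0: "e 0 = 0" and eN: "e N = 0" by (auto simp: ebasis_def)

lemma S_mem: "p \<in> S_C ix N \<longleftrightarrow> p = 0 \<or> (\<exists>s j. s \<in> {-1,1} \<and> j \<in> {1..N} \<and> p = s *\<^sub>R u j)"
proof
  assume "p \<in> S_C ix N"
  then consider "p = 0" | i j where "p = e i - e j" "{i, j} \<in> cycle_edges N"
    unfolding S_C_def by blast
  then show "p = 0 \<or> (\<exists>s j. s \<in> {-1,1} \<and> j \<in> {1..N} \<and> p = s *\<^sub>R u j)"
  proof cases
    case 1 then show ?thesis by simp
  next
    case 2
    from 2(2) consider k where "k < N - 1" "{i,j} = {k, Suc k}" | "{i,j} = {N-1, 0}"
      unfolding cycle_edges_def by blast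
    then show ?thesis
    proof cases
      case 1
      then have "Suc k \<in> {1..N}" by auto
      moreover have "u (Suc k) = e k - e (Suc k)" by (simp add: u_def)
      moreover have "i = k \<and> j = Suc k \<or> i = Suc k \<and> j = k" using 1(2) by (simp add: doubleton_eq_iff)
      ultimately have "p = u (Suc k) \<or> p = - u (Suc k)" using 2(1) by auto
      then show ?thesis
      proof
        assume "p = u (Suc k)" then show ?thesis using \<open>Suc k \<in> {1..N}\<close>
          by (intro disjI2 exI[of _ 1] exI[of _ "Suc k"]) auto
      next
        assume "p = - u (Suc k)" then show ?thesis using \<open>Suc k \<in> {1..N}\<close>
          by (intro disjI2 exI[of _ "-1"] exI[of _ "Suc k"]) auto
      qed
    next
      case 3: 2
      have "N \<in> {1..N}" using N4 by auto
      moreover have "u N = e (N-1) - e 0" by (simp add: u_def e0 eN)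
      moreover have "i = N-1 \<and> j = 0 \<or> i = 0 \<and> j = N-1" using 3 by (simp add: doubleton_eq_iff)
      ultimately have "p = u N \<or> p = - u N" using 2(1) by auto
      then show ?thesis
      proof
        assume "p = u N" then show ?thesis using \<open>N \<in> {1..N}\<close>
          by (intro disjI2 exI[of _ 1] exI[of _ N]) auto
      next
        assume "p = - u N" then show ?thesis using \<open>N \<in> {1..N}\<close>
          by (intro disjI2 exI[of _ "-1"] exI[of _ N]) auto
      qed
    qed
  qed
next
  assume "p = 0 \<or> (\<exists>s j. s \<in> {-1,1} \<and> j \<in> {1..N} \<and> p = s *\<^sub>R u j)"
  then consider "p = 0" | s j where "s \<in> {-1,1}" "j \<in> {1..N}" "p = s *\<^sub>R u j" by blast
  then show "p \<in> S_C ix N"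
  proof cases
    case 1 then show ?thesis by (simp add: S_C_def)
  next
    case 2
    have edge: "e a - e b \<in> S_C ix N" if "{a, b} \<in> cycle_edges N" for a b
      using that unfolding S_C_def by blast
    have edge2: "e a - e b \<in> S_C ix N \<and> e b - e a \<in> S_C ix N" if "{a, b} \<in> cycle_edges N" for a b
      using edge[OF that] edge[of b a] that by (simp add: insert_commute)
    show ?thesis
    proof (cases "j = N")
      case True
      have "{N-1, 0} \<in> cycle_edges N"
        unfolding cycle_edges_def by blast
      then have "e (N-1) - e 0 \<in> S_C ix N \<and> e 0 - e (N-1) \<in> S_C ix N" by (rule edge2)
      moreover have "u j = e (N-1) - e 0" using True by (simp add: u_def e0 eN)
      ultimately show ?thesis using 2 by auto
    next
      case False
      then have lt: "j - 1 < N - 1" and sj: "Suc (j - 1) = j" using 2 by auto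
      have "{j-1, Suc (j-1)} \<in> cycle_edges N"
        unfolding cycle_edges_def using lt by blast
      then have "e (j-1) - e j \<in> S_C ix N \<and> e j - e (j-1) \<in> S_C ix N" using edge2 sj by metis
      then show ?thesis using 2 by (auto simp: u_def)
    qed
  qed
qed

lemma finite_S: "finite (S_C ix N)"
proof -
  have "S_C ix N \<subseteq> insert 0 ((\<lambda>(s,j). s *\<^sub>R u j) ` ({-1,1} \<times> {1..N}))"
    using S_mem by fastforce
  then show ?thesis by (rule finite_subset) auto
qed

lemma zero_S: "0 \<in> S_C ix N" using S_mem by auto

lemma u_S: "s \<in> {-1,1} \<Longrightarrow> j \<in> {1..N} \<Longrightarrow> s *\<^sub>R u j \<in> S_C ix N" using S_mem by auto

lemma omega_0: "omega ix N 0 = 0" by (simp add: omega_def)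

lemma e1: "e 1 = - u 1" by (simp add: u_def e0)
lemma e1': "e (Suc 0) = - u (Suc 0)" by (simp add: u_def e0)

lemma omega_u:
  assumes "s \<in> {-1,1}" "j \<in> {1..N}"
  shows "omega ix N (s *\<^sub>R u j) = wt j"
proof -
  have one: "(1::nat) \<in> {1..N}" using N4 by auto
  have "s *\<^sub>R u j \<noteq> 0" using u_smult_nz assms by auto
  moreover have "s *\<^sub>R u j = e 1 \<longleftrightarrow> j = 1 \<and> s = -1"
    using u_smult_eq[OF assms(2) one assms(1), of "-1"] by (simp add: e1')
  moreover have "s *\<^sub>R u j = - e 1 \<longleftrightarrow> j = 1 \<and> s = 1"
    using u_smult_eq[OF assms(2) one assms(1), of "1"] by (simp add: e1')
  ultimately show ?thesis using assms(1) by (auto simp: omega_def wt_def)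
qed

lemma Lambda_val: "l \<in> Lambda N \<Longrightarrow> j \<in> {1..N} \<Longrightarrow> (of_int (l j) :: real) \<in> {-1,1}"
proof -
  assume "l \<in> Lambda N" "j \<in> {1..N}"
  then have "l j = -1 \<or> l j = 1" by (auto simp: Lambda_def)
  then show ?thesis by auto
qed

lemma vv_eq: "j \<in> {1..N} \<Longrightarrow> vv ix N l j = of_int (l j) *\<^sub>R u j"
  by (simp add: vv_def u_def)

lemma vv_0: "vv ix N l 0 = 0" by (simp add: vv_def)

definition W :: "(nat \<Rightarrow> int) \<Rightarrow> nat \<Rightarrow> (real^'n) set" where
  "W l i = (\<lambda>j. of_int (l j) *\<^sub>R u j) ` ({1..N} - {i})"

lemma W_inj: "l \<in> Lambda N \<Longrightarrow> inj_on (\<lambda>j. of_int (l j) *\<^sub>R u j) {1..N}"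
  unfolding inj_on_def using u_smult_eq Lambda_val by blast

lemma W_nz: "l \<in> Lambda N \<Longrightarrow> 0 \<notin> W l i"
  unfolding W_def using u_smult_nz Lambda_val by fastforce

lemma VV_minus:
  assumes "l \<in> Lambda N" "i \<in> {1..N}"
  shows "VV ix N l - {vv ix N l i} = insert 0 (W l i)"
proof -
  have "VV ix N l = insert 0 ((\<lambda>j. of_int (l j) *\<^sub>R u j) ` {1..N})"
  proof -
    have "{0..N} = insert 0 {1..N}" by auto
    then show ?thesis unfolding VV_def using vv_eq vv_0 by (simp add: image_iff)
  qed
  moreover have "vv ix N l i \<noteq> 0" using vv_eq assms u_smult_nz Lambda_val by fastforce
  moreover have "(\<lambda>j. of_int (l j) *\<^sub>R u j) ` {1..N} - {vv ix N l i} = W l i"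
    unfolding W_def vv_eq[OF assms(2)] using inj_on_image_set_diff[OF W_inj[OF assms(1)], of "{1..N}" "{i}"] assms(2)
    by auto
  ultimately show ?thesis by auto
qed

lemma W_card: "l \<in> Lambda N \<Longrightarrow> i \<in> {1..N} \<Longrightarrow> card (W l i) = N - 1 \<and> finite (W l i)"
  unfolding W_def using card_image[OF inj_on_subset[OF W_inj, of l "{1..N} - {i}"]] by auto

lemma W_indep:
  assumes "l \<in> Lambda N" "i \<in> {1..N}"
  shows "independent (W l i)"
proof
  assume "dependent (W l i)"
  then obtain c where c: "\<exists>v\<in>W l i. c v \<noteq> 0" "(\<Sum>v\<in>W l i. c v *\<^sub>R v) = 0"
    using dependent_finite W_card[OF assms] by blast
  then obtain v where v: "v \<in> W l i" "c v \<noteq> 0" by blast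
  then obtain m where m0: "m \<in> {1..N} - {i}" "v = of_int (l m) *\<^sub>R u m" unfolding W_def by blast
  then have m: "m \<in> {1..N} - {i}" "c (of_int (l m) *\<^sub>R u m) \<noteq> 0" using v by auto
  obtain d where d: "d \<bullet> u m = 1" "\<forall>k\<in>{1..N}-{m,i}. d \<bullet> u k = 0"
    using dual[of m i] m assms by auto
  have "0 = d \<bullet> (\<Sum>v\<in>W l i. c v *\<^sub>R v)" using c by simp
  also have "\<dots> = (\<Sum>v\<in>W l i. c v * (d \<bullet> v))" by (simp add: inner_sum_right)
  also have "\<dots> = (\<Sum>j\<in>{1..N}-{i}. c (of_int (l j) *\<^sub>R u j) * (of_int (l j) * (d \<bullet> u j)))"
    unfolding W_def by (subst sum.reindex) (auto intro: inj_on_subset[OF W_inj[OF assms(1)]])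
  also have "\<dots> = (\<Sum>j\<in>{1..N}-{i}. if j = m then c (of_int (l m) *\<^sub>R u m) * of_int (l m) else 0)"
    using d by (intro sum.cong) auto
  also have "\<dots> = c (of_int (l m) *\<^sub>R u m) * of_int (l m)" using m by (simp add: sum.delta)
  finally show False using m Lambda_val[OF assms(1), of m] by auto
qed

lemma E_facts:
  assumes "l \<in> Lambda N" "i \<in> {1..N}"
  shows "\<not> affine_dependent (insert 0 (W l i))" "card (insert 0 (W l i)) = N"
    "finite (insert 0 (W l i))" "insert 0 (W l i) \<subseteq> S_C ix N"
proof -
  show "\<not> affine_dependent (insert 0 (W l i))"
    using affine_dependent_iff_dependent[OF W_nz[OF assms(1)]] W_indep[OF assms] by simp
  show "card (insert 0 (W l i)) = N" using W_card[OF assms] W_nz[OF assms(1)] N4 by simp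
  show "finite (insert 0 (W l i))" using W_card[OF assms] by simp
  show "insert 0 (W l i) \<subseteq> S_C ix N" unfolding W_def using zero_S u_S Lambda_val[OF assms(1)] by auto
qed

lemma ebasis_Ints: "e k $ m \<in> \<int>"
  by (auto simp: ebasis_def axis_def)

lemma S_lattice: "p \<in> S_C ix N \<Longrightarrow> lattice_point p"
  unfolding S_mem lattice_point_def u_def using ebasis_Ints by auto

end

lemma parity_pm1:
  fixes \<sigma> :: "nat \<Rightarrow> int"
  assumes "finite A" "\<forall>j\<in>A. \<sigma> j \<in> {-1,1}"
  shows "even (sum \<sigma> A) \<longleftrightarrow> even (card A)"
  using assms
proof (induction A rule: finite_induct)
  case empty then show ?case by simp
next
  case (insert x F)
  then have "odd (\<sigma> x)" by auto
  then show ?case using insert by auto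
qed

context cyc
begin

lemma comb:
  fixes \<alpha> :: "nat \<Rightarrow> real" and g0 :: real
  assumes sum0: "sum \<alpha> {1..N} = 0" and g0: "g0 \<le> 0"
    and bnd: "\<forall>j\<in>{1..N}. \<bar>\<alpha> j\<bar> \<le> wt j - g0"
    and cnt: "N \<le> card {j\<in>{1..N}. \<bar>\<alpha> j\<bar> = wt j - g0} + (if g0 = 0 then 1 else 0)"
  shows "g0 = 0 \<and> (\<exists>l\<in>Lambda N. \<exists>i\<in>{1..N}. l i = l 1 \<and> \<bar>\<alpha> i\<bar> < wt i \<and> (\<forall>j\<in>{1..N}-{i}. \<alpha> j = wt j * of_int (l j)))"
proof -
  define J where "J = {j\<in>{1..N}. \<bar>\<alpha> j\<bar> = wt j - g0}"
  define \<sigma> where "\<sigma> j = (if \<alpha> j \<ge> 0 then 1 else -1::int)" for j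
  have wpos: "wt j - g0 > 0" for j using g0 by (simp add: wt_def)
  have \<sigma>J: "\<alpha> j = of_int (\<sigma> j) * (wt j - g0)" if "j \<in> J" for j
    using that unfolding J_def \<sigma>_def by (auto split: if_splits)
  have \<sigma>v: "\<sigma> j \<in> {-1,1}" for j by (simp add: \<sigma>_def)
  have JN: "J \<subseteq> {1..N}" by (auto simp: J_def)
  have split1: "sum f {1..N} = f 1 + sum f {2..N}" for f :: "nat \<Rightarrow> 'b::comm_monoid_add"
  proof -
    have "sum f {1..N} = f 1 + sum f {Suc 1..N}" using N4 by (intro sum.atLeast_Suc_atMost) simp
    then show ?thesis by (simp only: Suc_1)
  qed
  have c2: "card {2..N} = N - 1" by simp
  have oddK: "odd (sum \<sigma> {2..N})"
    using parity_pm1[of "{2..N}" \<sigma>] \<sigma>v c2 evN N4 by auto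
  have notall: "J \<noteq> {1..N}"
  proof
    assume JA: "J = {1..N}"
    define K where "K = sum \<sigma> {2..N}"
    have "sum \<alpha> {2..N} = (\<Sum>j\<in>{2..N}. of_int (\<sigma> j) * (1 - g0))"
      using JA \<sigma>J by (intro sum.cong) (auto simp: wt_def)
    also have "\<dots> = of_int K * (1 - g0)" by (simp add: K_def sum_distrib_right)
    finally have sK: "sum \<alpha> {2..N} = of_int K * (1 - g0)" .
    have a1: "\<alpha> 1 = of_int (\<sigma> 1) * (2 - g0)" using JA \<sigma>J[of 1] N4 by (simp add: wt_def)
    have "of_int (\<sigma> 1) * (2 - g0) + of_int K * (1 - g0) = 0" using sum0 split1[of \<alpha>] sK a1 by simp
    then have "\<bar>of_int K * (1 - g0)\<bar> = 2 - g0" using \<sigma>v[of 1] g0 by (auto simp: abs_if split: if_splits)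
    then have eq: "of_int \<bar>K\<bar> * (1 - g0) = 2 - g0" using g0 by (simp add: abs_mult)
    have "odd K" using oddK K_def by simp
    then have "\<bar>K\<bar> = 1 \<or> \<bar>K\<bar> \<ge> 3" by presburger
    then show False
    proof
      assume "\<bar>K\<bar> = 1" then show False using eq by simp
    next
      assume "\<bar>K\<bar> \<ge> 3"
      then have "of_int \<bar>K\<bar> * (1 - g0) \<ge> 3 * (1 - g0)" using g0
        by (intro mult_right_mono) auto
      then have "3 * (1 - g0) \<le> 2 - g0" using eq by simp
      then show False using g0 by (simp add: algebra_simps)
    qed
  qed
  have cardJ: "card J < N" using psubset_card_mono[of "{1..N}" J] JN notall by auto
  have gz: "g0 = 0" using cnt cardJ unfolding J_def[symmetric] by (auto split: if_splits)
  have cJ: "card J \<ge> N - 1" using cnt gz unfolding J_def[symmetric] by simp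
  obtain i where i: "i \<in> {1..N}" "i \<notin> J" using notall JN by blast
  have Jeq: "J = {1..N} - {i}"
  proof (rule card_subset_eq)
    show "finite ({1..N} - {i})" by simp
    show "J \<subseteq> {1..N} - {i}" using JN i by auto
    show "card J = card ({1..N} - {i})" using i cJ cardJ by simp
  qed
  have \<sigma>J0: "\<alpha> j = of_int (\<sigma> j) * wt j" if "j \<in> {1..N}" "j \<noteq> i" for j
    using \<sigma>J[of j] that Jeq gz by simp
  have ai: "\<bar>\<alpha> i\<bar> < wt i" using bnd i gz unfolding J_def by force
  show ?thesis
  proof (cases "i = 1")
    case True
    define K where "K = sum \<sigma> {2..N}"
    have "sum \<alpha> {2..N} = (\<Sum>j\<in>{2..N}. of_int (\<sigma> j))"
      using \<sigma>J0 True by (intro sum.cong) (auto simp: wt_def)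
    then have sK: "sum \<alpha> {2..N} = of_int K" by (simp add: K_def)
    then have a1: "\<alpha> 1 = - of_int K" using sum0 split1[of \<alpha>] by simp
    then have "\<bar>K\<bar> < 2" using ai True by (simp add: wt_def)
    moreover have "odd K" using oddK K_def by simp
    ultimately have K1: "K = 1 \<or> K = -1" by presburger
    define l where "l j = (if j = 1 then -K else if j \<in> {1..N} then \<sigma> j else 0)" for j
    have "sum l {2..N} = K" unfolding K_def l_def by (intro sum.cong) auto
    moreover have "l 1 = - K" using N4 by (simp add: l_def)
    ultimately have "sum l {1..N} = 0" using split1[of l] by simp
    moreover have "\<forall>j\<in>{1..N}. l j \<in> {-1,1}" using K1 \<sigma>v by (auto simp: l_def)
    moreover have "\<forall>j. j \<notin> {1..N} \<longrightarrow> l j = 0" using N4 by (auto simp: l_def)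
    ultimately have lL: "l \<in> Lambda N" by (auto simp: Lambda_def)
    have "\<forall>j\<in>{1..N}-{i}. \<alpha> j = wt j * of_int (l j)"
      using \<sigma>J0 True by (auto simp: l_def wt_def)
    then show ?thesis using lL i True gz ai by blast
  next
    case False
    then have i2: "i \<in> {2..N}" using i by auto
    have split2: "sum f {1..N} = f 1 + (f i + sum f ({2..N} - {i}))" for f :: "nat \<Rightarrow> 'b::comm_monoid_add"
      using split1[of f] sum.remove[OF _ i2, of f] by simp
    define K where "K = sum \<sigma> ({2..N} - {i})"
    have "card ({2..N} - {i}) = N - 2" using i2 by simp
    then have evK: "even K" using parity_pm1[of "{2..N} - {i}" \<sigma>] \<sigma>v evN N4 unfolding K_def by auto
    have "sum \<alpha> ({2..N} - {i}) = (\<Sum>j\<in>{2..N} - {i}. of_int (\<sigma> j))"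
      using \<sigma>J0 by (intro sum.cong) (auto simp: wt_def)
    then have sK: "sum \<alpha> ({2..N} - {i}) = of_int K" by (simp add: K_def)
    have a1: "\<alpha> 1 = 2 * of_int (\<sigma> 1)" using \<sigma>J0[of 1] False N4 by (simp add: wt_def)
    have "\<alpha> i = - of_int (2 * \<sigma> 1 + K)" using sum0 split2[of \<alpha>] sK a1 by simp
    moreover have "\<bar>\<alpha> i\<bar> < 1" using ai False by (simp add: wt_def)
    ultimately have "\<bar>2 * \<sigma> 1 + K\<bar> < 1" by linarith
    then have K0: "2 * \<sigma> 1 + K = 0" by simp
    define l where "l j = (if j = i then \<sigma> 1 else if j \<in> {1..N} then \<sigma> j else 0)" for j
    have "sum l ({2..N} - {i}) = K" unfolding K_def l_def by (intro sum.cong) auto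
    then have "sum l {1..N} = 0" using split2[of l] K0 False N4 by (simp add: l_def)
    moreover have "\<forall>j\<in>{1..N}. l j \<in> {-1,1}" using \<sigma>v by (auto simp: l_def)
    moreover have "\<forall>j. j \<notin> {1..N} \<longrightarrow> l j = 0" using i by (auto simp: l_def)
    ultimately have lL: "l \<in> Lambda N" by (auto simp: Lambda_def)
    have "l i = l 1" using False N4 by (simp add: l_def)
    moreover have "\<forall>j\<in>{1..N}-{i}. \<alpha> j = wt j * of_int (l j)"
      using \<sigma>J0 a1 False by (auto simp: l_def wt_def)
    ultimately show ?thesis using lL i gz ai by blast
  qed
qed

end

lemma conv_contact:
  fixes L :: "'a::euclidean_space set"
  assumes "finite L" "\<forall>p\<in>L. a \<bullet> p \<ge> d" "x \<in> convex hull L" "a \<bullet> x = d"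
  shows "x \<in> convex hull {p\<in>L. a \<bullet> p = d}"
proof -
  obtain w where w: "\<forall>p\<in>L. 0 \<le> w p" "sum w L = 1" "(\<Sum>p\<in>L. w p *\<^sub>R p) = x"
    using assms(3) unfolding convex_hull_finite[OF assms(1)] by blast
  have "(\<Sum>p\<in>L. w p * (a \<bullet> p - d)) = a \<bullet> (\<Sum>p\<in>L. w p *\<^sub>R p) - d * sum w L"
    by (simp add: inner_sum_right algebra_simps sum_subtractf sum_distrib_left sum_distrib_right)
  also have "\<dots> = 0" using w assms(4) by simp
  finally have z: "(\<Sum>p\<in>L. w p * (a \<bullet> p - d)) = 0" .
  have "\<forall>p\<in>L. w p * (a \<bullet> p - d) = 0"
    using sum_nonneg_eq_0_iff[OF assms(1), of "\<lambda>p. w p * (a \<bullet> p - d)"] z w(1) assms(2) by auto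
  then have wz: "\<forall>p\<in>L - {p\<in>L. a \<bullet> p = d}. w p = 0" by auto
  have fin: "finite {p\<in>L. a \<bullet> p = d}" using assms(1) by simp
  have "sum w {p\<in>L. a \<bullet> p = d} = sum w L"
    by (rule sum.mono_neutral_left) (use assms(1) wz in auto)
  moreover have "(\<Sum>p\<in>{p\<in>L. a \<bullet> p = d}. w p *\<^sub>R p) = (\<Sum>p\<in>L. w p *\<^sub>R p)"
    by (rule sum.mono_neutral_left) (use assms(1) wz in auto)
  ultimately show ?thesis unfolding convex_hull_finite[OF fin] using w by auto
qed

lemma hull_halfspace:
  fixes L :: "'a::euclidean_space set"
  assumes "\<forall>p\<in>L. a \<bullet> p \<ge> d" "x \<in> convex hull L"
  shows "a \<bullet> x \<ge> d"
proof -
  have "convex hull L \<subseteq> {x. a \<bullet> x \<ge> d}"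
    by (rule hull_minimal) (use assms(1) convex_halfspace_ge in auto)
  then show ?thesis using assms(2) by auto
qed

lemma linear_fst': "linear (fst :: 'a::real_vector \<times> 'b::real_vector \<Rightarrow> 'a)"
  unfolding linear_iff by auto

lemma pm1:
  fixes s L :: real
  assumes "s \<in> {-1,1}" "L \<in> {-1,1}"
  shows "s * L \<le> 1" "s * L = 1 \<longleftrightarrow> s = L" "s * L \<le> 2 \<and> s * L \<noteq> 2"
    "s * (2 * L) \<le> 2" "s * (2 * L) = 2 \<longleftrightarrow> s = L"
  using assms by auto

context cyc
begin

abbreviation "Sc \<equiv> S_C ix N"
abbreviation "om \<equiv> omega ix N"
abbreviation "Q \<equiv> lifted Sc om"
definition lift :: "real^'n \<Rightarrow> (real^'n) \<times> real" where "lift p = (p, om p)"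
abbreviation "E l i \<equiv> insert 0 (W l i)"

lemma Q_def': "Q = convex hull (lift ` Sc)" by (simp add: lifted_def lift_def)

lemma fst_lift_image: "fst ` lift ` A = A" by (force simp: lift_def image_iff)

lemma fst_hull: "fst ` (convex hull (lift ` A)) = convex hull A"
  using convex_hull_linear_image[OF linear_fst', of "lift ` A"] fst_lift_image by simp

lemma lift_in_Q: "p \<in> Sc \<Longrightarrow> lift p \<in> Q" unfolding Q_def' by (simp add: hull_inc)

lemma polytope_Q: "polytope Q" unfolding Q_def' polytope_def using finite_S by blast

lemma SFc:
  assumes lL: "l \<in> Lambda N" and i: "i \<in> {1..N}" and li: "l i = l 1"
  shows "\<exists>c. (\<forall>p\<in>Sc. c \<bullet> p \<le> om p) \<and> {p\<in>Sc. c \<bullet> p = om p} = E l i"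
proof -
  define \<alpha> where "\<alpha> j = (if i = 1 then of_int (l j) else if j = 1 then 2 * of_int (l 1)
      else if j = i then 0 else (of_int (l j) :: real))" for j
  have one: "(1::nat) \<in> {1..N}" using N4 by auto
  have sl: "sum l {1..N} = 0" using lL by (simp add: Lambda_def)
  have s0: "sum \<alpha> {1..N} = 0"
  proof (cases "i = 1")
    case True
    then show ?thesis using sl by (simp add: \<alpha>_def flip: of_int_sum)
  next
    case False
    have "\<alpha> = (\<lambda>j. of_int (l j) + (if j = 1 then of_int (l 1) else 0) - (if j = i then of_int (l i) else 0))"
      using False li by (auto simp: \<alpha>_def fun_eq_iff)
    then show ?thesis using sl one i li
      by (simp add: sum.distrib sum_subtractf sum.delta flip: of_int_sum)
  qed
  define c where "c = cvec \<alpha>"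
  have cu: "j \<in> {1..N} \<Longrightarrow> c \<bullet> (s *\<^sub>R u j) = s * \<alpha> j" for s j
    using u_inner[OF s0] by (simp add: c_def)
  have mem: "s *\<^sub>R u j \<in> E l i \<longleftrightarrow> j \<noteq> i \<and> s = of_int (l j)"
    if "s \<in> {-1,1}" "j \<in> {1..N}" for s j
  proof
    assume "s *\<^sub>R u j \<in> E l i"
    moreover have "s *\<^sub>R u j \<noteq> 0" using u_smult_nz that by auto
    ultimately have "s *\<^sub>R u j \<in> W l i" by simp
    then obtain k where k: "k \<in> {1..N} - {i}" "s *\<^sub>R u j = of_int (l k) *\<^sub>R u k"
      unfolding W_def by (rule imageE) simp
    then show "j \<noteq> i \<and> s = of_int (l j)"
      using u_smult_eq[OF that(2) _ that(1) Lambda_val[OF lL]] by auto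
  next
    assume "j \<noteq> i \<and> s = of_int (l j)"
    then show "s *\<^sub>R u j \<in> E l i" using that unfolding W_def by auto
  qed
  have num: "s * \<alpha> j \<le> wt j \<and> (s * \<alpha> j = wt j \<longleftrightarrow> j \<noteq> i \<and> s = of_int (l j))"
    if "s \<in> {-1,1}" "j \<in> {1..N}" for s j
  proof -
    have lj: "of_int (l j) \<in> {-1,1::real}" using Lambda_val[OF lL that(2)] .
    have l1: "of_int (l 1) \<in> {-1,1::real}" using Lambda_val[OF lL one] .
    have l1i: "of_int (l i) = (of_int (l 1) :: real)" using li by simp
    define L where "L = (of_int (l j) :: real)"
    define L1 where "L1 = (of_int (l 1) :: real)"
    have s: "s = -1 \<or> s = 1" and L: "L = -1 \<or> L = 1" and L1: "L1 = -1 \<or> L1 = 1"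
      using that lj l1 by (auto simp: L_def L1_def)
    have sL: "s \<in> {-1,1}" "L \<in> {-1,1}" "L1 \<in> {-1,1}" using s L L1 by auto
    have Lj: "s = of_int (l j) \<longleftrightarrow> s = L" by (simp add: L_def)
    consider "i = 1" "j = 1" | "i = 1" "j \<noteq> 1" | "i \<noteq> 1" "j = 1" | "i \<noteq> 1" "j = i"
      | "i \<noteq> 1" "j \<noteq> 1" "j \<noteq> i" by metis
    then show ?thesis
    proof cases
      case 1
      then have "\<alpha> j = L" "wt j = 2" by (simp_all add: \<alpha>_def L_def wt_def)
      then show ?thesis using 1 pm1(3)[OF sL(1,2)] by simp
    next
      case 2
      then have "\<alpha> j = L" "wt j = 1" by (simp_all add: \<alpha>_def L_def wt_def)
      then show ?thesis unfolding Lj using 2 pm1(1,2)[OF sL(1,2)] by simp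
    next
      case 3
      then have "\<alpha> j = 2 * L1" "wt j = 2" "L = L1" by (simp_all add: \<alpha>_def L_def L1_def wt_def)
      then show ?thesis unfolding Lj using 3 pm1(4,5)[OF sL(1,3)] by simp
    next
      case 4
      then have "\<alpha> j = 0" "wt j = 1" by (simp_all add: \<alpha>_def wt_def)
      then show ?thesis using 4 by simp
    next
      case 5
      then have "\<alpha> j = L" "wt j = 1" by (simp_all add: \<alpha>_def L_def wt_def)
      then show ?thesis unfolding Lj using 5 pm1(1,2)[OF sL(1,2)] by simp
    qed
  qed
  have main: "c \<bullet> p \<le> om p \<and> (c \<bullet> p = om p \<longleftrightarrow> p \<in> E l i)" if pS: "p \<in> Sc" for p
  proof (cases "p = 0")
    case True then show ?thesis by (simp add: omega_0)
  next
    case False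
    then obtain s j where sj: "s \<in> {-1,1}" "j \<in> {1..N}" and p: "p = s *\<^sub>R u j"
      using pS unfolding S_mem by auto
    have cp: "c \<bullet> p = s * \<alpha> j" unfolding p by (rule cu[OF sj(2)])
    have omp: "om p = wt j" using omega_u[OF sj] p by simp
    have pe: "(p \<in> E l i) = (j \<noteq> i \<and> s = of_int (l j))" unfolding p by (rule mem[OF sj])
    show ?thesis unfolding cp omp pe using num[OF sj] by blast
  qed
  show ?thesis
  proof (intro exI[of _ c] conjI)
    show "\<forall>p\<in>Sc. c \<bullet> p \<le> om p" using main by blast
    show "{p \<in> Sc. c \<bullet> p = om p} = E l i"
    proof (intro set_eqI iffI)
      fix p assume "p \<in> {p \<in> Sc. c \<bullet> p = om p}"
      then have "p \<in> Sc" "c \<bullet> p = om p" by auto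
      then show "p \<in> E l i" using main[of p] by simp
    next
      fix p assume pE: "p \<in> E l i"
      then have "p \<in> Sc" using E_facts(4)[OF lL i] by blast
      then show "p \<in> {p \<in> Sc. c \<bullet> p = om p}" using main[of p] pE by simp
    qed
  qed
qed

end

lemma aff_dim_graph:
  fixes c :: "'a::euclidean_space"
  shows "aff_dim ((\<lambda>y. (y, c \<bullet> y)) ` A) = aff_dim A"
proof (rule aff_dim_injective_linear_image)
  show "linear (\<lambda>y. (y, c \<bullet> y))" unfolding linear_iff by (simp add: inner_add_right)
  show "inj (\<lambda>y. (y, c \<bullet> y))" by (auto simp: inj_on_def)
qed

lemma alt_sum: "(\<Sum>j=1..2*m. (-1::int)^j) = 0"
proof (induction m)
  case 0 then show ?case by simp
next
  case (Suc m)
  have "2 * Suc m = Suc (Suc (2 * m))" by simp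
  then show ?case using Suc by (simp add: sum.cl_ivl_Suc)
qed

context cyc
begin

lemma sum_u_k: "(\<Sum>j=1..k. u j) = e 0 - e k"
proof (induction k)
  case 0 then show ?case by simp
next
  case (Suc k) then show ?case by (simp add: sum.cl_ivl_Suc u_def)
qed

lemma sum_u: "(\<Sum>j=1..N. u j) = 0" using sum_u_k[of N] by (simp add: e0 eN)

lemma Lambda_ne: "\<exists>l. l \<in> Lambda N"
proof -
  define l where "l j = (if j \<in> {1..N} then (-1::int)^j else 0)" for j
  have "sum l {1..N} = (\<Sum>j=1..N. (-1::int)^j)" by (intro sum.cong) (auto simp: l_def)
  also have "\<dots> = 0" using alt_sum[of "N div 2"] evN by simp
  finally have "sum l {1..N} = 0" .
  moreover have "\<forall>j\<in>{1..N}. l j \<in> {-1,1}"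
  proof
    fix j :: nat assume "j \<in> {1..N}"
    have "(-1::int)^j = 1 \<or> (-1::int)^j = -1" by (cases "even j") auto
    then show "l j \<in> {-1,1}" using \<open>j \<in> {1..N}\<close> by (auto simp: l_def)
  qed
  moreover have "\<forall>j. j \<notin> {1..N} \<longrightarrow> l j = 0" by (auto simp: l_def)
  ultimately show ?thesis by (auto simp: Lambda_def)
qed

lemma contact_eq: "{p\<in>A. c \<bullet> p = om p} = B \<Longrightarrow> \<forall>p\<in>B. om p = c \<bullet> p"
  by auto

lemma lift_graph: "\<forall>p\<in>A. om p = c \<bullet> p \<Longrightarrow> lift ` A = (\<lambda>y. (y, c \<bullet> y)) ` A"
  by (auto simp: lift_def image_iff)

lemma lift0: "lift 0 = 0" by (simp add: lift_def omega_0 zero_prod_def)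

lemma affQ: "aff_dim Q = int N"
proof -
  obtain l0 where l0: "l0 \<in> Lambda N" using Lambda_ne by blast
  have one: "(1::nat) \<in> {1..N}" using N4 by auto
  obtain c where c1: "\<forall>p\<in>Sc. c \<bullet> p \<le> om p" and c2: "{p\<in>Sc. c \<bullet> p = om p} = E l0 1"
    using SFc[OF l0 one refl] by blast
  define G where "G = (\<lambda>y. (y, c \<bullet> y)) ` E l0 1"
  have Gl: "G = lift ` E l0 1" unfolding G_def using contact_eq[OF c2] by (intro lift_graph[symmetric])
  have "aff_dim G = int N - 1"
    unfolding G_def aff_dim_graph using aff_dim_affine_independent[OF E_facts(1)[OF l0 one]] E_facts(2)[OF l0 one]
    by simp
  moreover have "(0, 1) \<notin> affine hull G"
  proof
    assume "(0, 1) \<in> affine hull G"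
    moreover have "affine hull G \<subseteq> {y. (-c, 1::real) \<bullet> y = 0}"
      by (rule hull_minimal) (auto simp: G_def affine_hyperplane)
    ultimately show False by auto
  qed
  ultimately have ai: "aff_dim (insert (0,1) G) = int N" by (simp add: aff_dim_insert)
  have "insert (0,1) G \<subseteq> Q"
  proof
    fix y assume "y \<in> insert (0,1) G"
    then consider "y = (0,1)" | "y \<in> G" by blast
    then show "y \<in> Q"
    proof cases
      case 1
      have two: "(2::nat) \<in> {1..N}" using N4 by auto
      have a: "lift (1 *\<^sub>R u 2) \<in> Q" "lift ((-1) *\<^sub>R u 2) \<in> Q"
        by (rule lift_in_Q, rule u_S, simp, rule two)+
      have "(1/2::real) *\<^sub>R lift (1 *\<^sub>R u 2) + (1/2::real) *\<^sub>R lift ((-1) *\<^sub>R u 2) \<in> Q"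
        using a unfolding Q_def' by (intro convexD[OF convex_convex_hull]) auto
      moreover have "(1/2::real) *\<^sub>R lift (1 *\<^sub>R u 2) + (1/2::real) *\<^sub>R lift ((-1) *\<^sub>R u 2) = (0,1)"
        using omega_u[OF _ two, of 1] omega_u[OF _ two, of "-1"] by (simp add: lift_def wt_def)
      ultimately show ?thesis using 1 by simp
    next
      case 2
      then show ?thesis using Gl E_facts(4)[OF l0 one] lift_in_Q by auto
    qed
  qed
  then have "int N \<le> aff_dim Q" using aff_dim_subset ai by metis
  moreover have "aff_dim Q \<le> int N"
    using aff_dim_le_DIM[of Q] cardn Nn by simp
  ultimately show ?thesis by simp
qed

end

context cyc
begin

lemma finite_liftS: "finite (lift ` Sc)" using finite_S by simp

lemma lift_inner: "(a, b) \<bullet> lift p = a \<bullet> p + b * om p"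
  by (simp add: lift_def)

lemma B1:
  assumes lL: "l \<in> Lambda N" and i: "i \<in> {1..N}" and li: "l i = l 1"
  shows "convex hull (E l i) \<in> regular_subdivision Sc om"
proof -
  obtain c where c1: "\<forall>p\<in>Sc. c \<bullet> p \<le> om p" and c2: "{p\<in>Sc. c \<bullet> p = om p} = E l i"
    using SFc[OF lL i li] by blast
  define a where "a = (-c, 1::real)"
  have ai: "a \<bullet> lift p = om p - c \<bullet> p" for p by (simp add: a_def lift_inner)
  have aL: "\<forall>y\<in>lift ` Sc. a \<bullet> y \<ge> 0" using c1 ai by auto
  have EsubS: "E l i \<subseteq> Sc" using E_facts(4)[OF lL i] .
  have contact: "{y\<in>lift ` Sc. a \<bullet> y = 0} = lift ` E l i"
  proof -
    have "{y\<in>lift ` Sc. a \<bullet> y = 0} = lift ` {p\<in>Sc. c \<bullet> p = om p}" using ai by auto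
    then show ?thesis using c2 by simp
  qed
  define F where "F = Q \<inter> {y. a \<bullet> y = 0}"
  have Fh: "F = convex hull (lift ` E l i)"
  proof
    show "F \<subseteq> convex hull (lift ` E l i)"
    proof
      fix y assume "y \<in> F"
      then have "y \<in> convex hull (lift ` Sc)" "a \<bullet> y = 0" unfolding F_def Q_def' by auto
      then show "y \<in> convex hull (lift ` E l i)"
        using conv_contact[OF finite_liftS, where a=a and d=0 and x=y] aL contact by simp
    qed
    show "convex hull (lift ` E l i) \<subseteq> F"
      unfolding F_def
    proof (rule hull_minimal)
      show "lift ` E l i \<subseteq> Q \<inter> {y. a \<bullet> y = 0}" using contact EsubS lift_in_Q by auto
      show "convex (Q \<inter> {y. a \<bullet> y = 0})" by (simp add: Q_def' convex_Int convex_hyperplane)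
    qed
  qed
  have gr: "lift ` E l i = (\<lambda>y. (y, c \<bullet> y)) ` E l i" using contact_eq[OF c2] by (rule lift_graph)
  have facet: "F facet_of Q"
    unfolding facet_of_def
  proof (intro conjI)
    show "F face_of Q" unfolding F_def
    proof (rule face_of_Int_supporting_hyperplane_ge)
      show "convex Q" by (simp add: Q_def')
      show "0 \<le> a \<bullet> x" if "x \<in> Q" for x
        using hull_halfspace[OF aL, of x] that by (simp add: Q_def')
    qed
    show "F \<noteq> {}" unfolding Fh using hull_subset by fastforce
    have "aff_dim F = aff_dim (E l i)" unfolding Fh aff_dim_convex_hull gr aff_dim_graph ..
    also have "\<dots> = int N - 1" using aff_dim_affine_independent[OF E_facts(1)[OF lL i]] E_facts(2)[OF lL i]
      by simp
    finally show "aff_dim F = aff_dim Q - 1" using affQ by simp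
  qed
  have "lower_facet_of F Q"
    unfolding lower_facet_of_def
  proof (intro conjI facet exI[of _ a] exI[of _ 0])
    show "0 < snd a" by (simp add: a_def)
    show "Q \<subseteq> {x. 0 \<le> a \<bullet> x}" using hull_halfspace[OF aL] unfolding Q_def' by auto
    show "F = Q \<inter> {x. a \<bullet> x = 0}" by (simp add: F_def)
  qed
  moreover have "fst ` F = convex hull (E l i)" unfolding Fh by (rule fst_hull)
  ultimately show ?thesis unfolding regular_subdivision_def by blast
qed

lemma B2:
  assumes lf: "lower_facet_of F Q"
  shows "\<exists>l i. l \<in> Lambda N \<and> i \<in> {1..N} \<and> l i = l 1 \<and> fst ` F = convex hull (E l i)"
proof -
  from lf obtain c' d where fac: "F facet_of Q" and sc: "snd c' > 0" and Qs: "Q \<subseteq> {x. c' \<bullet> x \<ge> d}"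
    and Fe: "F = Q \<inter> {x. c' \<bullet> x = d}"
    unfolding lower_facet_of_def by blast
  obtain a b where ab: "c' = (a, b)" by (cases c')
  have b: "b > 0" using sc ab by simp
  have ineq: "a \<bullet> p + b * om p \<ge> d" if "p \<in> Sc" for p
    using Qs lift_in_Q[OF that] ab by (auto simp: lift_inner)
  define g0 where "g0 = d / b"
  define cc where "cc = - (1 / b) *\<^sub>R a"
  have gc: "g0 + cc \<bullet> p = (d - a \<bullet> p) / b" for p
    by (simp add: g0_def cc_def diff_divide_distrib)
  have le: "g0 + cc \<bullet> p \<le> om p" if "p \<in> Sc" for p
    using ineq[OF that] b unfolding gc by (simp add: divide_le_eq algebra_simps)
  have eqv: "g0 + cc \<bullet> p = om p \<longleftrightarrow> c' \<bullet> lift p = d" for p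
    using b unfolding gc ab lift_inner by (auto simp: divide_eq_eq algebra_simps)
  define E' where "E' = {p\<in>Sc. g0 + cc \<bullet> p = om p}"
  have aL: "\<forall>y\<in>lift ` Sc. c' \<bullet> y \<ge> d" using Qs lift_in_Q by auto
  have contact: "{y\<in>lift ` Sc. c' \<bullet> y = d} = lift ` E'"
    unfolding E'_def using eqv by auto
  have Fh: "F = convex hull (lift ` E')"
  proof
    show "F \<subseteq> convex hull (lift ` E')"
    proof
      fix y assume "y \<in> F"
      then have "y \<in> convex hull (lift ` Sc)" "c' \<bullet> y = d" unfolding Fe Q_def' by auto
      then show "y \<in> convex hull (lift ` E')"
        using conv_contact[OF finite_liftS, where a=c' and d=d and x=y] aL contact by simp
    qed
    show "convex hull (lift ` E') \<subseteq> F"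
      unfolding Fe
    proof (rule hull_minimal)
      show "lift ` E' \<subseteq> Q \<inter> {y. c' \<bullet> y = d}" using contact lift_in_Q unfolding E'_def by auto
      show "convex (Q \<inter> {y. c' \<bullet> y = d})" by (simp add: Q_def' convex_Int convex_hyperplane)
    qed
  qed
  have finE': "finite E'" unfolding E'_def using finite_S by simp
  have "int N - 1 = aff_dim F" using fac affQ unfolding facet_of_def by simp
  also have "\<dots> = aff_dim (lift ` E')" unfolding Fh aff_dim_convex_hull ..
  also have "\<dots> \<le> int (card (lift ` E')) - 1" using aff_dim_le_card[of "lift ` E'"] finE' by simp
  also have "\<dots> \<le> int (card E') - 1" using card_image_le[OF finE', of lift] by simp
  finally have cardE': "N \<le> card E'" by simp
  define \<alpha> where "\<alpha> j = cc \<bullet> u j" for j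
  have s0: "sum \<alpha> {1..N} = 0" unfolding \<alpha>_def using sum_u by (simp flip: inner_sum_right)
  have g0: "g0 \<le> 0" using le[OF zero_S] by (simp add: omega_0)
  have bnd2: "g0 + s * \<alpha> j \<le> wt j" if "s \<in> {-1,1}" "j \<in> {1..N}" for s j
    using le[OF u_S[OF that]] omega_u[OF that] by (simp add: \<alpha>_def)
  have bnd: "\<forall>j\<in>{1..N}. \<bar>\<alpha> j\<bar> \<le> wt j - g0"
  proof
    fix j :: nat assume j: "j \<in> {1..N}"
    show "\<bar>\<alpha> j\<bar> \<le> wt j - g0" using bnd2[OF _ j, of 1] bnd2[OF _ j, of "-1"] by simp
  qed
  define J where "J = {j\<in>{1..N}. \<bar>\<alpha> j\<bar> = wt j - g0}"
  define sg where "sg j = (if \<alpha> j \<ge> 0 then 1 else (-1::real))" for j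
  have wpos: "wt j - g0 > 0" for j using g0 by (simp add: wt_def)
  have Esub: "E' \<subseteq> (if g0 = 0 then {0} else {}) \<union> (\<lambda>j. sg j *\<^sub>R u j) ` J"
  proof
    fix p assume pE: "p \<in> E'"
    then have pS: "p \<in> Sc" and pe: "g0 + cc \<bullet> p = om p" unfolding E'_def by auto
    show "p \<in> (if g0 = 0 then {0} else {}) \<union> (\<lambda>j. sg j *\<^sub>R u j) ` J"
    proof (cases "p = 0")
      case True then show ?thesis using pe by (simp add: omega_0)
    next
      case False
      then obtain s j where sj: "s \<in> {-1,1}" "j \<in> {1..N}" and p: "p = s *\<^sub>R u j"
        using pS unfolding S_mem by auto
      have "g0 + s * \<alpha> j = wt j" using pe omega_u[OF sj] p by (simp add: \<alpha>_def)
      moreover have "\<bar>\<alpha> j\<bar> \<le> wt j - g0" using bnd sj by auto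
      moreover note wpos[of j]
      ultimately have "j \<in> J \<and> s = sg j" using sj unfolding J_def sg_def by (auto split: if_splits)
      then show ?thesis using p by auto
    qed
  qed
  have "card E' \<le> card ((if g0 = 0 then {0} else {}) \<union> (\<lambda>j. sg j *\<^sub>R u j) ` J)"
    by (rule card_mono[OF _ Esub]) (simp add: J_def)
  also have "\<dots> \<le> card (if g0 = 0 then {0::real^'n} else {}) + card ((\<lambda>j. sg j *\<^sub>R u j) ` J)"
    by (rule card_Un_le)
  also have "\<dots> \<le> (if g0 = 0 then 1 else 0) + card J"
  proof -
    have "finite J" by (simp add: J_def)
    then show ?thesis using card_image_le[of J "\<lambda>j. sg j *\<^sub>R u j"] by simp
  qed
  finally have cnt: "N \<le> card J + (if g0 = 0 then 1 else 0)" using cardE' by simp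
  obtain l i where gz: "g0 = 0" and lL: "l \<in> Lambda N" and i: "i \<in> {1..N}" and li: "l i = l 1"
    and ai: "\<bar>\<alpha> i\<bar> < wt i" and aj: "\<forall>j\<in>{1..N}-{i}. \<alpha> j = wt j * of_int (l j)"
    using comb[OF s0 g0 bnd cnt[unfolded J_def]] by blast
  have Esub2: "E' \<subseteq> E l i"
  proof
    fix p assume pE: "p \<in> E'"
    then have pS: "p \<in> Sc" and pe: "g0 + cc \<bullet> p = om p" unfolding E'_def by auto
    show "p \<in> E l i"
    proof (cases "p = 0")
      case True then show ?thesis by simp
    next
      case False
      then obtain s j where sj: "s \<in> {-1,1}" "j \<in> {1..N}" and p: "p = s *\<^sub>R u j"
        using pS unfolding S_mem by auto
      have sa: "s * \<alpha> j = wt j" using pe omega_u[OF sj] p gz by (simp add: \<alpha>_def)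
      have "j \<noteq> i"
      proof
        assume "j = i"
        then have "\<bar>s * \<alpha> j\<bar> < wt j" using ai sj by (auto simp: abs_mult)
        then show False using sa wpos[of j] gz by simp
      qed
      then have "s * (wt j * of_int (l j)) = wt j" using aj sj sa by auto
      then have "s * of_int (l j) = 1" by (simp add: wt_def split: if_splits)
      then have "s = of_int (l j)" using pm1(2)[OF sj(1) Lambda_val[OF lL sj(2)]] by simp
      then show ?thesis using p sj \<open>j \<noteq> i\<close> unfolding W_def by auto
    qed
  qed
  have "E' = E l i"
    using card_subset_eq[OF E_facts(3)[OF lL i] Esub2] E_facts(2)[OF lL i] cardE'
      card_mono[OF E_facts(3)[OF lL i] Esub2] by simp
  moreover have "fst ` F = convex hull E'" unfolding Fh by (rule fst_hull)
  ultimately show ?thesis using lL i li by blast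
qed

lemma RS_eq: "regular_subdivision Sc om = (\<Union>l\<in>Lambda N. Delta_plus ix N l)"
proof
  show "regular_subdivision Sc om \<subseteq> (\<Union>l\<in>Lambda N. Delta_plus ix N l)"
  proof
    fix C assume "C \<in> regular_subdivision Sc om"
    then obtain F where "lower_facet_of F Q" "C = fst ` F" unfolding regular_subdivision_def by blast
    then obtain l i where lL: "l \<in> Lambda N" and i: "i \<in> {1..N}" and li: "l i = l 1"
      and C: "C = convex hull (E l i)"
      using B2 by blast
    then have "C = convex hull (VV ix N l - {vv ix N l i})" using VV_minus[OF lL i] by simp
    then have "C \<in> Delta_plus ix N l" unfolding Delta_plus_def using i li by auto
    then show "C \<in> (\<Union>l\<in>Lambda N. Delta_plus ix N l)" using \<open>l \<in> Lambda N\<close> by blast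
  qed
  show "(\<Union>l\<in>Lambda N. Delta_plus ix N l) \<subseteq> regular_subdivision Sc om"
  proof
    fix C assume "C \<in> (\<Union>l\<in>Lambda N. Delta_plus ix N l)"
    then obtain l i where "l \<in> Lambda N" "i \<in> {1..N}" "l i = l 1" "C = convex hull (VV ix N l - {vv ix N l i})"
      unfolding Delta_plus_def by auto
    then show "C \<in> regular_subdivision Sc om" using B1 VV_minus by auto
  qed
qed

end

context cyc
begin

lemma PC_eq: "convex hull Sc = P_C ix N"
proof -
  define D where "D = {e i - e j | i j. {i, j} \<in> cycle_edges N}"
  have SD: "Sc = insert 0 D" unfolding D_def S_C_def by auto
  have one: "(1::nat) \<in> {1..N}" using N4 by auto
  have "1 *\<^sub>R u 1 \<in> D" "(-1) *\<^sub>R u 1 \<in> D"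
    using u_S[OF _ one, of 1] u_S[OF _ one, of "-1"] u_smult_nz[OF one] SD by auto
  then have "(1/2::real) *\<^sub>R (1 *\<^sub>R u 1) + (1/2::real) *\<^sub>R ((-1) *\<^sub>R u 1) \<in> convex hull D"
    by (intro convexD[OF convex_convex_hull]) (auto simp: hull_inc)
  then have "0 \<in> convex hull D" by (simp add: scaleR_left_distrib[symmetric])
  then show ?thesis unfolding SD P_C_def D_def[symmetric] by (rule hull_redundant)
qed

lemma fst_Q: "fst ` Q = convex hull Sc" unfolding Q_def' by (rule fst_hull)

lemma T_finite: "finite (regular_subdivision Sc om)"
proof -
  have "regular_subdivision Sc om \<subseteq> (\<lambda>F. fst ` F) ` {F. F face_of Q}"
    unfolding regular_subdivision_def lower_facet_of_def using facet_of_imp_face_of by blast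
  then show ?thesis using finite_polytope_faces[OF polytope_Q] finite_subset by blast
qed

lemma T_sub: "C \<in> regular_subdivision Sc om \<Longrightarrow> C \<subseteq> convex hull Sc"
  unfolding regular_subdivision_def lower_facet_of_def using fst_Q facet_of_imp_subset by blast

lemma cover:
  assumes x: "x \<in> convex hull Sc"
  shows "\<exists>C\<in>regular_subdivision Sc om. x \<in> C"
proof -
  define K where "K = snd ` (Q \<inter> {y. fst y = x})"
  have cQ: "compact Q" unfolding Q_def' by (rule finite_imp_compact_convex_hull[OF finite_liftS])
  have "closed {y :: (real^'n) \<times> real. fst y = x}"
    by (rule closed_Collect_eq) (auto intro: continuous_intros)
  then have "compact K" unfolding K_def using cQ
    by (intro compact_continuous_image) (auto intro: continuous_intros)
  moreover have "K \<noteq> {}" using x fst_Q unfolding K_def by force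
  ultimately obtain t0 where t0: "t0 \<in> K" "\<forall>t\<in>K. t0 \<le> t" using compact_attains_inf by blast
  have xt0: "(x, t0) \<in> Q" using t0(1) unfolding K_def by force
  have below: "(x, t) \<notin> Q" if "t < t0" for t
    using t0(2) that unfolding K_def by force
  have "polyhedron Q" by (rule polytope_imp_polyhedron[OF polytope_Q])
  then obtain Fs where finF: "finite Fs" and seq: "Q = affine hull Q \<inter> \<Inter>Fs"
    and faces: "\<forall>h\<in>Fs. \<exists>a b. a \<noteq> 0 \<and> h = {x. a \<bullet> x \<le> b}"
    and psub: "\<forall>F'. F' \<subset> Fs \<longrightarrow> Q \<subset> affine hull Q \<inter> \<Inter>F'"
    unfolding polyhedron_Int_affine_minimal by blast
  obtain A B where AB: "\<And>h. h \<in> Fs \<Longrightarrow> A h \<noteq> 0 \<and> h = {x. A h \<bullet> x \<le> B h}"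
    using faces by metis
  have ahQ: "affine hull Q = UNIV"
    using affQ cardn Nn aff_dim_eq_full[of Q] by simp
  have Qeq: "Q = \<Inter>Fs" using seq ahQ by simp
  have inner_shift: "A h \<bullet> (x, t0 - \<epsilon>) = A h \<bullet> (x, t0) - \<epsilon> * snd (A h)" for h \<epsilon>
    by (cases "A h") (simp add: algebra_simps)
  have "\<exists>h\<in>Fs. snd (A h) < 0 \<and> A h \<bullet> (x, t0) = B h"
  proof (rule ccontr)
    assume nh: "\<not> ?thesis"
    have inh: "A h \<bullet> (x, t0) \<le> B h" if "h \<in> Fs" for h using xt0 Qeq AB[OF that] that by blast
    define R where "R = {(B h - A h \<bullet> (x, t0)) / (- snd (A h)) | h. h \<in> Fs \<and> snd (A h) < 0}"
    have finR: "finite R" unfolding R_def using finF by simp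
    define \<epsilon> where "\<epsilon> = Min (insert 1 R)"
    have Rpos: "\<forall>r\<in>R. r > 0"
    proof
      fix r assume "r \<in> R"
      then obtain h where h: "h \<in> Fs" "snd (A h) < 0" "r = (B h - A h \<bullet> (x, t0)) / (- snd (A h))"
        unfolding R_def by blast
      then have "A h \<bullet> (x, t0) < B h" using inh[OF h(1)] nh by force
      then have "B h - A h \<bullet> (x, t0) > 0" "- snd (A h) > 0" using h(2) by auto
      then have "(B h - A h \<bullet> (x, t0)) / (- snd (A h)) > 0" by (rule divide_pos_pos)
      then show "r > 0" using h(3) by simp
    qed
    have epos: "\<epsilon> > 0" unfolding \<epsilon>_def using finR Rpos by (simp add: Min_gr_iff)
    have "(x, t0 - \<epsilon>) \<in> Q"
      unfolding Qeq
    proof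
      fix h assume h: "h \<in> Fs"
      have "A h \<bullet> (x, t0 - \<epsilon>) \<le> B h"
      proof (cases "snd (A h) < 0")
        case True
        then have "(B h - A h \<bullet> (x, t0)) / (- snd (A h)) \<in> R" unfolding R_def using h by blast
        then have "\<epsilon> \<le> (B h - A h \<bullet> (x, t0)) / (- snd (A h))" unfolding \<epsilon>_def using finR by simp
        moreover define sa where "sa = - snd (A h)"
        ultimately have "\<epsilon> \<le> (B h - A h \<bullet> (x, t0)) / sa" by simp
        moreover have sa: "sa > 0" using True sa_def by simp
        ultimately have "\<epsilon> * sa \<le> B h - A h \<bullet> (x, t0)" by (simp add: pos_le_divide_eq)
        then show ?thesis unfolding inner_shift sa_def by simp
      next
        case False
        then have "\<epsilon> * snd (A h) \<ge> 0" using epos by simp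
        then show ?thesis unfolding inner_shift using inh[OF h] by simp
      qed
      then show "(x, t0 - \<epsilon>) \<in> h" using AB[OF h] by blast
    qed
    then show False using below[of "t0 - \<epsilon>"] epos by simp
  qed
  then obtain h where h: "h \<in> Fs" "snd (A h) < 0" "A h \<bullet> (x, t0) = B h" by blast
  define F where "F = Q \<inter> {y. A h \<bullet> y = B h}"
  have "F facet_of Q"
    unfolding F_def
    using facet_of_polyhedron_explicit[OF finF seq, of A B] AB psub h(1) by blast
  moreover have "Q \<subseteq> {y. (- A h) \<bullet> y \<ge> - B h}" using Qeq AB[OF h(1)] h(1) by auto
  moreover have "F = Q \<inter> {y. (- A h) \<bullet> y = - B h}" unfolding F_def by auto
  moreover have "snd (- A h) > 0" using h(2) by simp
  ultimately have "lower_facet_of F Q" unfolding lower_facet_of_def by blast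
  moreover have "x \<in> fst ` F" using xt0 h(3) unfolding F_def by force
  ultimately show ?thesis unfolding regular_subdivision_def by blast
qed

lemma T_union: "\<Union>(regular_subdivision Sc om) = convex hull Sc"
  using T_sub cover by blast

lemma inter_hull:
  assumes c1: "\<forall>p\<in>Sc. c1 \<bullet> p \<le> om p" "{p\<in>Sc. c1 \<bullet> p = om p} = E1"
    and c2: "\<forall>p\<in>Sc. c2 \<bullet> p \<le> om p" "{p\<in>Sc. c2 \<bullet> p = om p} = E2"
  shows "convex hull E1 \<inter> convex hull E2 = convex hull (E1 \<inter> E2)"
proof
  show "convex hull (E1 \<inter> E2) \<subseteq> convex hull E1 \<inter> convex hull E2"
    by (simp add: hull_mono)
  have E1S: "E1 \<subseteq> Sc" and E2S: "E2 \<subseteq> Sc" using c1(2) c2(2) by auto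
  have lin: "linear (\<lambda>y. (y, c \<bullet> y))" for c :: "real^'n"
    unfolding linear_iff by (simp add: inner_add_right)
  have pt: "(x, c \<bullet> x) \<in> convex hull (lift ` E)" if "x \<in> convex hull E" "\<forall>p\<in>E. om p = c \<bullet> p" for x c E
  proof -
    have "(\<lambda>y. (y, c \<bullet> y)) ` (convex hull E) = convex hull ((\<lambda>y. (y, c \<bullet> y)) ` E)"
      by (rule convex_hull_linear_image[OF lin])
    then show ?thesis using that lift_graph[OF that(2)] by force
  qed
  have ge: "(-ca, 1) \<bullet> y \<ge> 0" if "y \<in> convex hull (lift ` Sc)" "\<forall>p\<in>Sc. ca \<bullet> p \<le> om p" for y ca
    using hull_halfspace[where L="lift ` Sc" and a="(-ca, 1::real)" and d=0 and x=y] that by (auto simp: lift_inner)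
  show "convex hull E1 \<inter> convex hull E2 \<subseteq> convex hull (E1 \<inter> E2)"
  proof
    fix x assume "x \<in> convex hull E1 \<inter> convex hull E2"
    then have x1: "x \<in> convex hull E1" and x2: "x \<in> convex hull E2" by auto
    have p1: "(x, c1 \<bullet> x) \<in> convex hull (lift ` E1)" using pt[OF x1] contact_eq[OF c1(2)] by blast
    have p2: "(x, c2 \<bullet> x) \<in> convex hull (lift ` E2)" using pt[OF x2] contact_eq[OF c2(2)] by blast
    have "convex hull (lift ` E1) \<subseteq> convex hull (lift ` Sc)" "convex hull (lift ` E2) \<subseteq> convex hull (lift ` Sc)"
      using E1S E2S by (auto intro!: hull_mono)
    then have "(-c1, 1) \<bullet> (x, c2 \<bullet> x) \<ge> 0" "(-c2, 1) \<bullet> (x, c1 \<bullet> x) \<ge> 0"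
      using ge[OF _ c1(1)] ge[OF _ c2(1)] p1 p2 by blast+
    then have eq: "(-c1, 1) \<bullet> (x, c2 \<bullet> x) = 0" by simp
    have fin2: "finite (lift ` E2)" using E2S finite_S finite_subset by blast
    have nn: "\<forall>q\<in>lift ` E2. (-c1, 1) \<bullet> q \<ge> 0" using E2S c1(1) by (auto simp: lift_inner)
    have "(x, c2 \<bullet> x) \<in> convex hull {q\<in>lift ` E2. (-c1, 1) \<bullet> q = 0}"
      using conv_contact[OF fin2 nn p2 eq] .
    moreover have "{q\<in>lift ` E2. (-c1, 1) \<bullet> q = 0} = lift ` (E1 \<inter> E2)"
      using E2S c1(2) by (auto simp: lift_inner image_iff)
    ultimately have "(x, c2 \<bullet> x) \<in> convex hull (lift ` (E1 \<inter> E2))" by simp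
    then have "x \<in> fst ` (convex hull (lift ` (E1 \<inter> E2)))" by force
    then show "x \<in> convex hull (E1 \<inter> E2)" using fst_hull by simp
  qed
qed

end

typedef 'a wo = "UNIV :: 'a set" by auto

instance wo :: (finite) finite
proof
  have "(UNIV :: 'a wo set) = Abs_wo ` UNIV"
    by (metis Rep_wo_inverse UNIV_I image_eqI subsetI subset_antisym)
  then show "finite (UNIV :: 'a wo set)" using finite_imageI[of "UNIV::'a set" Abs_wo] by simp
qed

instantiation wo :: (finite) linorder
begin
definition less_eq_wo :: "'a wo \<Rightarrow> 'a wo \<Rightarrow> bool" where
  "less_eq_wo x y \<longleftrightarrow> to_nat (Rep_wo x) \<le> to_nat (Rep_wo y)"
definition less_wo :: "'a wo \<Rightarrow> 'a wo \<Rightarrow> bool" where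
  "less_wo x y \<longleftrightarrow> to_nat (Rep_wo x) < to_nat (Rep_wo y)"
instance
proof
  have inj: "to_nat (Rep_wo x) = to_nat (Rep_wo y) \<Longrightarrow> x = y" for x y :: "'a wo"
    by (simp add: Rep_wo_inject)
  fix x y z :: "'a wo"
  show "(x < y) = (x \<le> y \<and> \<not> y \<le> x)" by (auto simp: less_eq_wo_def less_wo_def)
  show "x \<le> x" by (simp add: less_eq_wo_def)
  show "x \<le> y \<Longrightarrow> y \<le> z \<Longrightarrow> x \<le> z" by (simp add: less_eq_wo_def)
  show "x \<le> y \<Longrightarrow> y \<le> x \<Longrightarrow> x = y" using inj by (simp add: less_eq_wo_def)
  show "x \<le> y \<or> y \<le> x" by (auto simp: less_eq_wo_def)
qed
end

instance wo :: (finite) wellorder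
proof
  fix P :: "'a wo \<Rightarrow> bool" and a :: "'a wo"
  assume step: "\<And>x. (\<And>y. y < x \<Longrightarrow> P y) \<Longrightarrow> P x"
  show "P a"
  proof (induction "to_nat (Rep_wo a)" arbitrary: a rule: less_induct)
    case less
    then show ?case using step by (auto simp: less_wo_def)
  qed
qed

definition Phi :: "real^'n \<Rightarrow> real^('n wo)" where "Phi x = (\<chi> j. x $ Rep_wo j)"
definition Psi :: "real^('n wo) \<Rightarrow> real^'n" where "Psi y = (\<chi> i. y $ Abs_wo i)"

lemma Psi_Phi [simp]: "Psi (Phi x) = x" by (simp add: Phi_def Psi_def Abs_wo_inverse vec_eq_iff)
lemma Phi_Psi [simp]: "Phi (Psi y) = y" by (simp add: Phi_def Psi_def Rep_wo_inverse vec_eq_iff)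

lemma linear_Phi: "linear Phi" unfolding linear_iff by (simp add: Phi_def vec_eq_iff)
lemma linear_Psi: "linear Psi" unfolding linear_iff by (simp add: Psi_def vec_eq_iff)

lemma bij_Rep_wo: "bij Rep_wo"
  by (metis Rep_wo_inverse Abs_wo_inverse UNIV_I bijI' )

lemma prod_Basis_vec: "(\<Prod>b\<in>(Basis :: (real^'m) set). g b) = (\<Prod>i\<in>UNIV. g (axis i 1))"
proof -
  have "(Basis :: (real^'m) set) = (\<lambda>i. axis i 1) ` UNIV" unfolding Basis_vec_def by auto
  then have "(\<Prod>b\<in>(Basis :: (real^'m) set). g b) = prod g ((\<lambda>i. axis i 1) ` UNIV)" by simp
  also have "\<dots> = prod (g \<circ> (\<lambda>i. axis i 1)) UNIV"
    by (rule prod.reindex) (auto simp: inj_on_def axis_eq_axis)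
  finally show ?thesis by simp
qed

lemma inner_Phi: "Phi x \<bullet> Phi y = x \<bullet> y"
proof -
  have "Phi x \<bullet> Phi y = (\<Sum>j\<in>UNIV. x $ Rep_wo j * y $ Rep_wo j)" by (simp add: inner_vec_def Phi_def)
  also have "\<dots> = (\<Sum>i\<in>UNIV. x $ i * y $ i)"
    using sum.reindex_bij_betw[OF bij_Rep_wo, of "\<lambda>i. x $ i * y $ i"] by simp
  finally show ?thesis by (simp add: inner_vec_def)
qed

lemma lborel_Psi: "distr lborel borel Psi = (lborel :: (real^'n::finite) measure)"
proof (rule lborel_eqI[symmetric])
  have mPsi: "Psi \<in> borel_measurable borel"
    by (intro borel_measurable_continuous_onI linear_continuous_on linear_conv_bounded_linear[THEN iffD1] linear_Psi)
  fix l u :: "real^'n" assume le: "\<And>b. b \<in> Basis \<Longrightarrow> l \<bullet> b \<le> u \<bullet> b"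
  have ex: "(\<forall>i. P i (Abs_wo i)) \<longleftrightarrow> (\<forall>j. P (Rep_wo j) j)" for P :: "'n \<Rightarrow> 'n wo \<Rightarrow> bool"
    by (metis Rep_wo_inverse Abs_wo_inverse UNIV_I)
  have pre: "Psi -` box l u = box (Phi l) (Phi u)"
  proof (rule set_eqI)
    fix y :: "real^'n wo"
    show "y \<in> Psi -` box l u \<longleftrightarrow> y \<in> box (Phi l) (Phi u)"
      unfolding vimage_eq mem_box_cart Psi_def Phi_def vec_lambda_beta
      using ex[of "\<lambda>i j. l $ i < y $ j \<and> y $ j < u $ i"] by simp
  qed
  have le2: "Phi l \<bullet> b \<le> Phi u \<bullet> b" if bB: "b \<in> Basis" for b
  proof -
    obtain j where j: "b = axis j 1" using bB unfolding Basis_vec_def by auto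
    have "axis (Rep_wo j) 1 \<in> (Basis :: (real^'n) set)" unfolding Basis_vec_def by auto
    then have "l \<bullet> axis (Rep_wo j) 1 \<le> u \<bullet> axis (Rep_wo j) 1" by (rule le)
    then have "l $ Rep_wo j \<le> u $ Rep_wo j" by (simp add: inner_axis)
    then show ?thesis using j by (simp add: inner_axis Phi_def)
  qed
  have "emeasure (distr lborel borel Psi) (box l u) = emeasure lborel (Psi -` box l u \<inter> space lborel)"
    by (rule emeasure_distr) (use mPsi in auto)
  also have "\<dots> = emeasure lborel (box (Phi l) (Phi u))" using pre by simp
  also have "\<dots> = (\<Prod>b\<in>Basis. (Phi u - Phi l) \<bullet> b)" using le2 by simp
  also have "\<dots> = (\<Prod>j\<in>UNIV. (u - l) $ Rep_wo j)"
    by (simp add: prod_Basis_vec inner_axis Phi_def)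
  also have "\<dots> = (\<Prod>i\<in>UNIV. (u - l) $ i)"
    using prod.reindex_bij_betw[OF bij_Rep_wo, of "\<lambda>i. (u - l) $ i"] by simp
  also have "\<dots> = (\<Prod>b\<in>Basis. (u - l) \<bullet> b)" by (simp add: prod_Basis_vec inner_axis)
  finally show "emeasure (distr lborel borel Psi) (box l u) = (\<Prod>b\<in>Basis. (u - l) \<bullet> b)" .
qed simp

lemma measure_Phi:
  fixes A :: "(real^'n::finite) set"
  assumes "A \<in> sets borel"
  shows "measure lborel (Phi ` A) = measure lborel A"
proof -
  have mPsi: "Psi \<in> borel_measurable borel"
    by (intro borel_measurable_continuous_onI linear_continuous_on linear_conv_bounded_linear[THEN iffD1] linear_Psi)
  have pre: "Psi -` A = Phi ` A"
  proof (rule set_eqI)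
    fix y show "y \<in> Psi -` A \<longleftrightarrow> y \<in> Phi ` A"
      by (metis Phi_Psi Psi_Phi image_iff vimage_eq)
  qed
  have m2: "Psi \<in> measurable lborel borel" using mPsi by simp
  have "measure lborel A = measure (distr lborel borel Psi) A" by (simp add: lborel_Psi)
  also have "\<dots> = measure lborel (Psi -` A \<inter> space lborel)" by (rule measure_distr[OF m2 assms])
  also have "\<dots> = measure lborel (Phi ` A)" using pre by simp
  finally have "measure lborel A = measure lborel (Phi ` A)" .
  then show ?thesis by simp
qed

lemma det_Ints: "(\<And>a b. A $ a $ b \<in> \<int>) \<Longrightarrow> det (A :: real^'m^'m) \<in> \<int>"
  unfolding det_def by (intro Ints_sum Ints_mult Ints_prod Ints_of_int) auto

lemma card_wo: "CARD('a::finite wo) = CARD('a)"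
  using bij_betw_same_card[OF bij_Rep_wo] .

context cyc
begin

lemma volume:
  assumes lL: "l \<in> Lambda N" and i: "i \<in> {1..N}"
  shows "fact CARD('n) * measure lebesgue (convex hull (E l i)) = 1"
proof -
  define w where "w j = of_int (l j) *\<^sub>R u j" for j
  define X where "X = Phi ` E l i"
  have finE: "finite (E l i)" using E_facts(3)[OF lL i] .
  have injPhi: "inj Phi" by (metis Psi_Phi injI)
  have cC: "compact (convex hull (E l i))" by (rule finite_imp_compact_convex_hull[OF finE])
  then have bC: "convex hull (E l i) \<in> sets borel" by (simp add: compact_imp_closed)
  have "measure lebesgue (convex hull (E l i)) = measure lborel (convex hull (E l i))"
    using bC by simp
  also have "\<dots> = measure lborel (Phi ` (convex hull (E l i)))" using measure_Phi[OF bC] by simp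
  also have "Phi ` (convex hull (E l i)) = convex hull X"
    unfolding X_def by (rule convex_hull_linear_image[OF linear_Phi])
  finally have m1: "measure lebesgue (convex hull (E l i)) = measure lborel (convex hull X)" .
  have cardI: "card ({1..N} - {i}) = CARD('n wo)" using i card_wo[where 'a='n] cardn Nn by simp
  obtain k where k: "bij_betw k (UNIV :: 'n wo set) ({1..N} - {i})"
    using finite_same_card_bij[of "UNIV :: 'n wo set" "{1..N} - {i}"] cardI by auto
  define f where "f = Phi \<circ> w \<circ> k"
  have Phi0: "Phi (0::real^'n) = 0" by (simp add: Phi_def vec_eq_iff)
  have XW: "X - {0} = Phi ` W l i"
  proof -
    have "X = insert 0 (Phi ` W l i)" unfolding X_def using Phi0 by simp
    moreover have "0 \<notin> Phi ` W l i" using W_nz[OF lL] Phi0 injPhi by (metis image_iff injD)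
    ultimately show ?thesis by simp
  qed
  have bw: "bij_betw w ({1..N} - {i}) (W l i)"
    unfolding bij_betw_def W_def w_def using inj_on_subset[OF W_inj[OF lL]] by auto
  have "bij_betw Phi (W l i) (Phi ` W l i)" by (simp add: bij_betw_def inj_on_subset[OF injPhi])
  then have "bij_betw (Phi \<circ> (w \<circ> k)) UNIV (Phi ` W l i)" by (rule bij_betw_trans[OF bij_betw_trans[OF k bw]])
  then have bf: "bij_betw f UNIV (X - {0})" unfolding XW f_def by (simp add: o_assoc)
  have "card X = card (E l i)" unfolding X_def by (rule card_image[OF inj_on_subset[OF injPhi]]) simp
  then have cardX: "card X = Suc CARD('n wo)"
    using E_facts(2)[OF lL i] card_wo[where 'a='n] cardn Nn by simp
  have "measure lborel (convex hull X) = \<bar>det (\<chi> a b. f b $ a - (0::real^'n wo) $ a)\<bar> / fact CARD('n wo)"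
    by (rule content_simplex) (use finE cardX bf Phi0 in \<open>auto simp: X_def\<close>)
  moreover define M where "M = (\<chi> a b. f b $ a - (0::real^'n wo) $ a)"
  ultimately have m2: "measure lborel (convex hull X) = \<bar>det M\<bar> / fact CARD('n wo)" by simp
  have kin: "k a \<in> {1..N} - {i}" for a using k bij_betwE by blast
  have "\<forall>m\<in>{1..N}-{i}. \<exists>c. c \<bullet> u m = 1 \<and> c \<bullet> u i = -1 \<and> (\<forall>j\<in>{1..N}-{m,i}. c \<bullet> u j = 0) \<and> (\<forall>t. c $ t \<in> \<int>)"
    using dual i by blast
  then obtain cf where cf: "\<And>m. m \<in> {1..N}-{i} \<Longrightarrow> cf m \<bullet> u m = 1 \<and> (\<forall>j\<in>{1..N}-{m,i}. cf m \<bullet> u j = 0) \<and> (\<forall>t. cf m $ t \<in> \<int>)"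
    by metis
  define dd where "dd m = of_int (l m) *\<^sub>R cf m" for m
  have ddw: "dd m \<bullet> w j = (if j = m then 1 else 0)" if "m \<in> {1..N}-{i}" "j \<in> {1..N}-{i}" for m j
  proof (cases "j = m")
    case True
    have "of_int (l m) * (of_int (l m) :: real) = 1" using Lambda_val[OF lL, of m] that by auto
    then show ?thesis using True cf[OF that(1)] by (simp add: dd_def w_def)
  next
    case False
    then show ?thesis using cf[OF that(1)] that by (simp add: dd_def w_def)
  qed
  define D where "D = (\<chi> a b. Phi (dd (k a)) $ b)"
  have "D ** M = mat 1"
  proof -
    have "(D ** M) $ a $ b = (if a = b then 1 else 0)" for a b
    proof -
      have "(D ** M) $ a $ b = (\<Sum>t\<in>UNIV. Phi (dd (k a)) $ t * Phi (w (k b)) $ t)"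
        by (simp add: matrix_matrix_mult_def D_def M_def f_def)
      also have "\<dots> = Phi (dd (k a)) \<bullet> Phi (w (k b))" by (simp add: inner_vec_def)
      also have "\<dots> = dd (k a) \<bullet> w (k b)" by (rule inner_Phi)
      also have "\<dots> = (if k b = k a then 1 else 0)" using ddw kin by simp
      also have "\<dots> = (if a = b then 1 else 0)" using k unfolding bij_betw_def inj_on_def by auto
      finally show ?thesis .
    qed
    then show ?thesis by (simp add: vec_eq_iff mat_def)
  qed
  then have dd1: "det D * det M = 1" by (metis det_mul det_I)
  have "det D \<in> \<int>"
  proof (rule det_Ints)
    fix a b
    have "dd (k a) $ Rep_wo b \<in> \<int>" using cf[OF kin[of a]] by (simp add: dd_def)
    then show "D $ a $ b \<in> \<int>" by (simp add: D_def Phi_def)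
  qed
  moreover have "det M \<in> \<int>"
  proof (rule det_Ints)
    fix a b
    have "w (k b) \<in> Sc" using E_facts(4)[OF lL i] kin[of b] unfolding W_def w_def by auto
    then have "w (k b) $ Rep_wo a \<in> \<int>" using S_lattice unfolding lattice_point_def by blast
    then show "M $ a $ b \<in> \<int>" by (simp add: M_def f_def Phi_def)
  qed
  ultimately obtain p q where "det D = of_int p" "det M = of_int q" by (metis Ints_cases)
  then have "p * q = 1" using dd1 by (metis of_int_1 of_int_eq_iff of_int_mult)
  then have "\<bar>q\<bar> = 1" by (auto simp: zmult_eq_1_iff)
  then have "\<bar>det M\<bar> = 1" using \<open>det M = of_int q\<close> by simp
  then show ?thesis using m1 m2 card_wo[where 'a='n] by simp
qed

end

context cyc
begin

lemma T_char:
  assumes "C \<in> regular_subdivision Sc om"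
  shows "\<exists>l i. l \<in> Lambda N \<and> i \<in> {1..N} \<and> l i = l 1 \<and> C = convex hull (E l i)"
proof -
  obtain F where F: "lower_facet_of F Q" "C = fst ` F" using assms unfolding regular_subdivision_def by blast
  obtain l i where "l \<in> Lambda N \<and> i \<in> {1..N} \<and> l i = l 1 \<and> fst ` F = convex hull (E l i)"
    using B2[OF F(1)] by blast
  then show ?thesis using F(2) by blast
qed

lemma unimod: "unimodular_triangulation_of Sc (regular_subdivision Sc om)"
  unfolding unimodular_triangulation_of_def
proof (intro conjI ballI)
  show "finite (regular_subdivision Sc om)" by (rule T_finite)
  show "\<Union>(regular_subdivision Sc om) = convex hull Sc" by (rule T_union)
next
  fix C assume "C \<in> regular_subdivision Sc om"
  then obtain l i where lL: "l \<in> Lambda N" and i: "i \<in> {1..N}" and C: "C = convex hull (E l i)"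
    using T_char by blast
  show "\<exists>V\<subseteq>Sc. \<not> affine_dependent V \<and> card V = CARD('n) + 1 \<and> C = convex hull V \<and>
      (\<forall>v\<in>V. lattice_point v) \<and> fact CARD('n) * measure lebesgue C = 1"
  proof (intro exI[of _ "E l i"] conjI)
    show "E l i \<subseteq> Sc" by (rule E_facts(4)[OF lL i])
    show "\<not> affine_dependent (E l i)" by (rule E_facts(1)[OF lL i])
    show "card (E l i) = CARD('n) + 1" using E_facts(2)[OF lL i] cardn Nn by simp
    show "C = convex hull (E l i)" by (rule C)
    show "\<forall>v\<in>E l i. lattice_point v" using E_facts(4)[OF lL i] S_lattice by blast
    show "fact CARD('n) * measure lebesgue C = 1" unfolding C by (rule volume[OF lL i])
  qed
next
  fix C1 C2 assume "C1 \<in> regular_subdivision Sc om" "C2 \<in> regular_subdivision Sc om"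
  then obtain l1 i1 l2 i2 where "l1 \<in> Lambda N \<and> i1 \<in> {1..N} \<and> l1 i1 = l1 1 \<and> C1 = convex hull (E l1 i1)"
    and "l2 \<in> Lambda N \<and> i2 \<in> {1..N} \<and> l2 i2 = l2 1 \<and> C2 = convex hull (E l2 i2)"
    using T_char by meson
  then have l1: "l1 \<in> Lambda N" "i1 \<in> {1..N}" "l1 i1 = l1 1" "C1 = convex hull (E l1 i1)"
    and l2: "l2 \<in> Lambda N" "i2 \<in> {1..N}" "l2 i2 = l2 1" "C2 = convex hull (E l2 i2)" by auto
  obtain c1 where c1: "\<forall>p\<in>Sc. c1 \<bullet> p \<le> om p" "{p\<in>Sc. c1 \<bullet> p = om p} = E l1 i1"
    using SFc[OF l1(1-3)] by blast
  obtain c2 where c2: "\<forall>p\<in>Sc. c2 \<bullet> p \<le> om p" "{p\<in>Sc. c2 \<bullet> p = om p} = E l2 i2"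
    using SFc[OF l2(1-3)] by blast
  have int: "C1 \<inter> C2 = convex hull (E l1 i1 \<inter> E l2 i2)"
    unfolding l1(4) l2(4) by (rule inter_hull[OF c1 c2])
  have "convex hull (E l1 i1 \<inter> E l2 i2) face_of convex hull (E l1 i1)"
    by (rule face_of_convex_hull_affine_independent[OF E_facts(1)[OF l1(1,2)], THEN iffD2],
        rule exI[of _ "E l1 i1 \<inter> E l2 i2"]) auto
  then show "C1 \<inter> C2 face_of C1" using int l1(4) by simp
  have "convex hull (E l1 i1 \<inter> E l2 i2) face_of convex hull (E l2 i2)"
    by (rule face_of_convex_hull_affine_independent[OF E_facts(1)[OF l2(1,2)], THEN iffD2],
        rule exI[of _ "E l1 i1 \<inter> E l2 i2"]) auto
  then show "C1 \<inter> C2 face_of C2" using int l2(4) by simp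
qed

end

theorem theorem5p5:
  fixes N n :: nat and ix :: "nat \<Rightarrow> 'n::finite"
  assumes "N = n + 1" and "N \<ge> 4" and "even N"
    and "CARD('n) = n" and "bij_betw ix {1..n} (UNIV :: 'n set)"
  shows "convex hull (S_C ix N) = P_C ix N
    \<and> unimodular_triangulation_of (S_C ix N) (regular_subdivision (S_C ix N) (omega ix N))
    \<and> regular_subdivision (S_C ix N) (omega ix N) = (\<Union>l\<in>Lambda N. Delta_plus ix N l)"
proof -
  interpret cyc N n ix using assms by unfold_locales
  show ?thesis using PC_eq unimod RS_eq by simp
qed

end
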